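(* Let $r\ge1$ and let $\gamma_1,\dots,\gamma_{r+1},p_1,\dots,p_{r+1},a_1,\dots,a_{r+1}$ be indeterminates. Let $\mathrm{Wr}$ denote the relations (coefficientwise in $z$) $$\det_{1\le i,j\le r+1}\big[(\gamma_i+\partial_z)^{j-1}(z-p_i)\big]=\det_{1\le i,j\le r+1}\big[z\gamma_i^{j-1}-p_i\gamma_i^{j-1}+(j-1)\gamma_i^{j-2}\big]=c\prod_{i=1}^{r+1}(z-a_i),\qquad c=\prod_{i<j}(\gamma_j-\gamma_i),$$ and set ${\rm Fun}(r{\rm Op}_Z^{\Lambda})=\mathbb{C}(\gamma_i,p_i,a_i)/\mathrm{Wr}$. Let $t=(t_{ij})_{i,j=1}^{r+1}$ be the rational Calogero–Moser Lax matrix $$t_{ii}=p_i-\sum_{j\neq i}\frac{1}{\gamma_i-\gamma_j},\qquad t_{ij}=\frac{1}{\gamma_i-\gamma_j}\cdot\frac{\prod_{k\neq i}(\gamma_i-\gamma_k)}{\prod_{l\neq j}(\gamma_j-\gamma_l)}\ (i\neq j),$$ and define the rCM Hamiltonians by $\det(z-t)=\sum_k H^{rCM}_k(\{\gamma_i\},\{p_i\})z^k$. Then there is an isomorphism of algebras $${\rm Fun}(r{\rm Op}_Z^{\Lambda})\cong\mathbb{C}(\gamma_i,p_i,a_i)\Big/\Big(\text{relations }\det(z-t)=\prod_{i=1}^{r+1}(z-a_i)\text{ coefficientwise in }z\Big).$$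
   Context: ${\rm Fun}(r{\rm Op}_Z^{\Lambda})$ is the algebra of functions on the space of canonical rationally $Z$-twisted Miura $SL(r+1)$-opers on $\mathbb{P}^1$: $Z=\mathrm{diag}(\gamma_1,\dots,\gamma_{r+1})$ is regular semisimple, the oper connection is gauge equivalent to $\partial_z+Z$, the section of the line subbundle has components $s_i(z)=z-p_i$ (degree one, monic), and the only regular singularities are the distinct roots $a_i$ of $\Lambda(z)=\mathcal{D}_{r+1}(z)$, where $\mathcal{D}_{r+1}$ is the twisted Wronskian $\det[(\gamma_i+\partial_z)^{j-1}s_i]$; this gives the relation $\mathrm{Wr}$. *)

theory Defs
  imports "Jordan_Normal_Form.Char_Poly" "Jordan_Normal_Form.Determinant"
begin

text \<open>Inverse of a unit in a commutative ring (only applied to units).\<close>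
definition uinv :: "'a::comm_ring_1 \<Rightarrow> 'a" where
  "uinv x = (SOME y. x * y = 1)"

text \<open>A commutative ring together with a unital ring homomorphism from the complex numbers,
  i.e. a commutative complex algebra.\<close>
definition complex_alg_hom :: "(complex \<Rightarrow> 'a::comm_ring_1) \<Rightarrow> bool" where
  "complex_alg_hom \<phi> \<longleftrightarrow> \<phi> 1 = 1 \<and> (\<forall>x y. \<phi> (x + y) = \<phi> x + \<phi> y) \<and> (\<forall>x y. \<phi> (x * y) = \<phi> x * \<phi> y)"

text \<open>Twisted Wronskian matrix, entry (i,j) (0-indexed) is
  (gamma_i + d/dz)^j (z - p_i) = z gamma_i^j - p_i gamma_i^j + j gamma_i^(j-1).\<close>
definition wr_matrix :: "nat \<Rightarrow> (nat \<Rightarrow> 'a::comm_ring_1) \<Rightarrow> (nat \<Rightarrow> 'a) \<Rightarrow> 'a poly mat" where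
  "wr_matrix n \<gamma> p = mat n n (\<lambda>(i, j).
     [: - p i * \<gamma> i ^ j + of_nat j * \<gamma> i ^ (j - 1), \<gamma> i ^ j :])"

definition vandermonde_const :: "nat \<Rightarrow> (nat \<Rightarrow> 'a::comm_ring_1) \<Rightarrow> 'a" where
  "vandermonde_const n \<gamma> = (\<Prod>(i, j) \<in> {(i, j). i < j \<and> j < n}. \<gamma> j - \<gamma> i)"

definition Wr_rel :: "nat \<Rightarrow> (nat \<Rightarrow> 'a::comm_ring_1) \<Rightarrow> (nat \<Rightarrow> 'a) \<Rightarrow> (nat \<Rightarrow> 'a) \<Rightarrow> bool" where
  "Wr_rel n \<gamma> p a \<longleftrightarrow>
     det (wr_matrix n \<gamma> p) = Polynomial.smult (vandermonde_const n \<gamma>) (\<Prod>i<n. [: - a i, 1 :])"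

definition rCM_lax :: "nat \<Rightarrow> (nat \<Rightarrow> 'a::comm_ring_1) \<Rightarrow> (nat \<Rightarrow> 'a) \<Rightarrow> 'a mat" where
  "rCM_lax n \<gamma> p = mat n n (\<lambda>(i, j).
     if i = j then p i - (\<Sum>k\<in>{k. k < n \<and> k \<noteq> i}. uinv (\<gamma> i - \<gamma> k))
     else uinv (\<gamma> i - \<gamma> j) * (\<Prod>k\<in>{k. k < n \<and> k \<noteq> i}. \<gamma> i - \<gamma> k)
            * uinv (\<Prod>l\<in>{l. l < n \<and> l \<noteq> j}. \<gamma> j - \<gamma> l))"

definition rCM_rel :: "nat \<Rightarrow> (nat \<Rightarrow> 'a::comm_ring_1) \<Rightarrow> (nat \<Rightarrow> 'a) \<Rightarrow> (nat \<Rightarrow> 'a) \<Rightarrow> bool" where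
  "rCM_rel n \<gamma> p a \<longleftrightarrow> char_poly (rCM_lax n \<gamma> p) = (\<Prod>i<n. [: - a i, 1 :])"

end

theory Submission
  imports Defs
begin
lemma uinv_unit: "(x::'a::comm_ring_1) dvd 1 \<Longrightarrow> x * uinv x = 1"
  unfolding uinv_def by (metis (mono_tags) dvd_def someI_ex)

lemma Q_props: "degree (\<Prod>l<j. [:-g l, 1:]) \<le> j \<and> coeff (\<Prod>l<j. [:-(g l::'a::comm_ring_1), 1:]) j = 1"
proof (induction j)
  case 0
  then show ?case by simp
next
  case (Suc j)
  let ?Q = "\<Prod>l<j. [:-g l, 1:]"
  have e: "(\<Prod>l<Suc j. [:-g l, 1:]) = Polynomial.smult (- g j) ?Q + pCons 0 ?Q"
    by (simp add: mult.commute)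
  have c0: "coeff ?Q (Suc j) = 0" using Suc by (simp add: coeff_eq_0)
  have "degree (Polynomial.smult (- g j) ?Q + pCons 0 ?Q) \<le> Suc j"
    by (rule degree_add_le) (use Suc in \<open>auto intro: le_trans[OF degree_smult_le] simp: degree_pCons_le\<close>)
  then show ?case unfolding e using Suc c0 by simp
qed

lemma poly_sum_lt: fixes p :: "'a::comm_ring_1 poly" assumes "degree p < n" shows "poly p x = (\<Sum>j<n. coeff p j * x^j)"
proof -
  have "poly p x = (\<Sum>i\<le>degree p. coeff p i * x^i)" by (rule Polynomial.poly_altdef)
  also have "\<dots> = (\<Sum>j<n. coeff p j * x^j)"
    by (rule sum.mono_neutral_left) (use assms in \<open>auto simp: coeff_eq_0\<close>)
  finally show ?thesis .
qed

lemma vandermonde_det: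
  fixes g :: "nat \<Rightarrow> 'a::comm_ring_1"
  shows "det (mat n n (\<lambda>(i,j). g i ^ j)) = vandermonde_const n g"
proof -
  define Q where "Q j = (\<Prod>l<j. [:-g l, 1:])" for j
  define V where "V = mat n n (\<lambda>(i,j). g i ^ j)"
  define U where "U = mat n n (\<lambda>(k,j). coeff (Q j) k)"
  define N where "N = mat n n (\<lambda>(i,j). \<Prod>l<j. g i - g l)"
  have VU: "V * U = N"
  proof (rule eq_matI)
    fix i j assume ij: "i < dim_row N" "j < dim_col N"
    have "(V * U) $$ (i,j) = (\<Sum>k<n. g i ^ k * coeff (Q j) k)"
      using ij by (simp add: V_def U_def N_def scalar_prod_def lessThan_atLeast0)
    also have "\<dots> = poly (Q j) (g i)"
      using Q_props[where g=g and j=j] ij by (subst poly_sum_lt[of _ n]) (auto simp: Q_def N_def mult.commute)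
    also have "\<dots> = N $$ (i,j)" using ij by (simp add: Q_def N_def poly_prod)
    finally show "(V * U) $$ (i,j) = N $$ (i,j)" .
  qed (auto simp: V_def U_def N_def)
  have dU: "det U = 1"
  proof -
    have z: "\<And>j i. j < i \<Longrightarrow> coeff (Q j) i = 0"
      unfolding Q_def using Q_props[where g=g] by (meson coeff_eq_0 le_less_trans)
    have "upper_triangular U"
      unfolding upper_triangular_def using z by (auto simp: U_def)
    then have "det U = prod_list (diag_mat U)" by (rule det_upper_triangular[of U n]) (simp add: U_def)
    also have "\<dots> = 1" unfolding diag_mat_def
      using Q_props[where g=g] by (auto simp: U_def Q_def intro!: prod_list_neutral)
    finally show ?thesis .
  qed
  have dN: "det N = (\<Prod>i<n. \<Prod>l<i. g i - g l)"
  proof -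
    have "det N = prod_list (diag_mat N)"
      by (rule det_lower_triangular[of n]) (auto simp: N_def intro!: prod_zero)
    also have "\<dots> = (\<Prod>i<n. \<Prod>l<i. g i - g l)"
      unfolding diag_mat_def
      by (simp add: N_def prod.distinct_set_conv_list[symmetric] lessThan_atLeast0 atLeast_upt)
    finally show ?thesis .
  qed
  have "det N = det V * det U"
    unfolding VU[symmetric] by (rule det_mult) (auto simp: V_def U_def)
  then have "det V = (\<Prod>i<n. \<Prod>l<i. g i - g l)" using dU dN by simp
  also have "\<dots> = vandermonde_const n g"
  proof -
    have s: "{(i, j). i < j \<and> j < n} = (\<lambda>(j,i). (i,j)) ` (SIGMA j:{..<n}. {..<j})" by auto
    have inj: "inj_on (\<lambda>(j,i). (i::nat,j::nat)) (SIGMA j:{..<n}. {..<j})" by (auto simp: inj_on_def)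
    show ?thesis unfolding vandermonde_const_def s prod.reindex[OF inj]
      by (simp add: prod.Sigma[symmetric] case_prod_beta del: prod.Sigma) (simp add: prod.Sigma split_beta)
  qed
  finally show ?thesis unfolding V_def .
qed

definition dv :: "'a::comm_ring_1 poly \<Rightarrow> 'a \<Rightarrow> 'a" where
  "dv p x = coeff (pcompose p [:x, 1:]) 1"

lemma coeff_pcomp_0: "coeff (pcompose p [:x, 1:]) 0 = poly p (x::'a::comm_ring_1)"
  by (metis poly_0_coeff_0 poly_pcompose poly_pCons add.right_neutral mult_zero_left mult_zero_right)

lemma coeff_mult_1: "coeff (p * q) 1 = coeff p 0 * coeff q 1 + coeff p 1 * coeff (q::'a::comm_ring_1 poly) 0"
  by (simp add: coeff_mult atMost_Suc)

lemma dv_mult: "dv (p * q) x = dv p x * poly q x + poly p x * dv q x"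
  unfolding dv_def pcompose_mult coeff_mult_1 coeff_pcomp_0 by (simp add: mult_ac)

lemma dv_smult: "dv (Polynomial.smult c p) x = c * dv p x"
  unfolding dv_def pcompose_smult by simp

lemma dv_sum: "dv (sum f A) x = (\<Sum>a\<in>A. dv (f a) x)"
  unfolding dv_def pcompose_sum by (simp add: coeff_sum)

lemma dv_lin: "dv [:-a, 1:] x = 1"
  unfolding dv_def by (simp add: pcompose_pCons)

lemma dv_prod: "finite A \<Longrightarrow> dv (prod f A) x = (\<Sum>a\<in>A. (\<Prod>l\<in>A - {a}. poly (f l) x) * dv (f a) x)"
proof (induction A rule: finite_induct)
  case empty
  then show ?case by (simp add: dv_def)
next
  case (insert a A)
  have s: "(\<Sum>b\<in>A. (\<Prod>l\<in>insert a A - {b}. poly (f l) x) * dv (f b) x)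
        = (\<Sum>b\<in>A. poly (f a) x * ((\<Prod>l\<in>A - {b}. poly (f l) x) * dv (f b) x))"
  proof (rule sum.cong[OF refl])
    fix b assume "b \<in> A"
    then have "insert a A - {b} = insert a (A - {b})" using insert by auto
    then show "(\<Prod>l\<in>insert a A - {b}. poly (f l) x) * dv (f b) x
        = poly (f a) x * ((\<Prod>l\<in>A - {b}. poly (f l) x) * dv (f b) x)"
      using insert by (simp add: mult_ac)
  qed
  have ia: "insert a A - {a} = A" using insert by auto
  have "dv (prod f (insert a A)) x = dv (f a) x * (\<Prod>l\<in>A. poly (f l) x) + poly (f a) x * dv (prod f A) x"
    using insert by (simp add: dv_mult poly_prod)
  also have "\<dots> = (\<Prod>l\<in>insert a A - {a}. poly (f l) x) * dv (f a) x +
      (\<Sum>b\<in>A. (\<Prod>l\<in>insert a A - {b}. poly (f l) x) * dv (f b) x)"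
    unfolding s ia insert.IH by (simp add: sum_distrib_left mult_ac)
  also have "\<dots> = (\<Sum>b\<in>insert a A. (\<Prod>l\<in>insert a A - {b}. poly (f l) x) * dv (f b) x)"
    using insert by simp
  finally show ?case .
qed

lemma dv_xpow: "coeff ([:x, 1:] ^ j) 1 = of_nat j * (x::'a::comm_ring_1) ^ (j - 1)"
proof (induction j)
  case 0
  then show ?case by simp
next
  case (Suc j)
  have c0: "coeff ([:x, 1:] ^ j) 0 = x ^ j"
    by (metis poly_0_coeff_0 poly_power poly_pCons add.right_neutral mult_zero_left mult_zero_right)
  have "coeff ([:x, 1:] ^ Suc j) 1 = x * coeff ([:x, 1:] ^ j) 1 + coeff ([:x, 1:] ^ j) 0"
    by (simp add: coeff_mult_1)
  also have "\<dots> = of_nat (Suc j) * x ^ j" using Suc c0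
    by (cases j) (simp_all add: algebra_simps)
  finally show ?case by simp
qed

lemma dv_monom: "dv (monom c j) x = c * (of_nat j * x ^ (j - 1))"
proof -
  have "monom c j = Polynomial.smult c ([:0, 1:] ^ j)" by (simp add: monom_altdef)
  moreover have "pcompose ([:0, 1:] ^ j) [:x, 1:] = [:x, 1:] ^ j"
    by (induction j) (simp_all add: pcompose_mult pcompose_pCons pcompose_1 del: power_Suc, simp add: pcompose_pCons)
  ultimately show ?thesis unfolding dv_def using dv_xpow[of x j] by (simp add: pcompose_smult)
qed

lemma dv_sum_lt:
  fixes p :: "'a::comm_ring_1 poly"
  assumes "degree p < n"
  shows "dv p x = (\<Sum>j<n. of_nat j * x^(j-1) * coeff p j)"
proof -
  have "p = (\<Sum>j<n. monom (coeff p j) j)"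
  proof -
    have "p = (\<Sum>i\<le>degree p. monom (coeff p i) i)" by (simp add: poly_as_sum_of_monoms)
    also have "\<dots> = (\<Sum>j<n. monom (coeff p j) j)"
      by (rule sum.mono_neutral_left) (use assms in \<open>auto simp: coeff_eq_0\<close>)
    finally show ?thesis .
  qed
  then have "dv p x = (\<Sum>j<n. dv (monom (coeff p j) j) x)" by (metis dv_sum)
  then show ?thesis by (simp add: dv_monom mult_ac)
qed

lemma prod_unit: "(\<And>x. x \<in> A \<Longrightarrow> (f x::'a::comm_ring_1) dvd 1) \<Longrightarrow> prod f A dvd 1"
  by (induction A rule: infinite_finite_induct) (auto simp: unit_prod)

lemma inv_neg: "(x::'a::comm_ring_1) * y = 1 \<Longrightarrow> (-x) * z = 1 \<Longrightarrow> z = -y"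
proof -
  assume a: "x * y = 1" and b: "(-x) * z = 1"
  have "z = z * (x * y)" using a by simp
  also have "\<dots> = - (((-x) * z) * y)" by (simp add: mult_ac)
  also have "\<dots> = - y" using b by simp
  finally show ?thesis .
qed

context
  fixes n :: nat and g :: "nat \<Rightarrow> 'a::comm_ring_1"
  assumes units: "\<And>i j. i < n \<Longrightarrow> j < n \<Longrightarrow> i \<noteq> j \<Longrightarrow> (g i - g j) dvd 1"
begin

abbreviation "SS k \<equiv> {l. l < n \<and> l \<noteq> k}"
abbreviation "ee k \<equiv> (\<Prod>l\<in>SS k. g k - g l)"
abbreviation "ww k \<equiv> uinv (ee k)"
abbreviation "uu i k \<equiv> uinv (g i - g k)"
abbreviation "LL k \<equiv> Polynomial.smult (ww k) (\<Prod>l\<in>SS k. [:-g l, 1:])"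

lemma ee_unit: "ee k dvd 1" if "k < n"
  using that by (intro prod_unit units) auto

lemma ee_ww: "ee k * ww k = 1" if "k < n"
  using uinv_unit[OF ee_unit[OF that]] .

lemma uu: "(g i - g k) * uu i k = 1" if "i < n" "k < n" "i \<noteq> k"
  using uinv_unit[OF units[OF that]] .

lemma uu_swap: "uu k i = - uu i k" if "i < n" "k < n" "i \<noteq> k"
  by (rule inv_neg[OF uu[OF that]]) (use uu[of k i] that in simp)

lemma degree_LL: "degree (LL k) < n" if "k < n"
proof -
  have "degree (LL k) \<le> degree (\<Prod>l\<in>SS k. [:-g l, 1:])" by (rule degree_smult_le)
  also have "\<dots> \<le> sum (degree \<circ> (\<lambda>l. [:-g l, 1:])) (SS k)" by (rule degree_prod_sum_le) simp
  also have "\<dots> = card (SS k)" by simp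
  also have "\<dots> < card {..<n}"
    by (rule psubset_card_mono) (use that in auto)
  finally show ?thesis by simp
qed

lemma poly_LL: "poly (LL k) (g i) = (if i = k then 1 else 0)" if "i < n" "k < n"
proof (cases "i = k")
  case True
  then show ?thesis using ee_ww[OF that(2)] by (simp add: poly_prod mult.commute)
next
  case False
  have "(\<Prod>l\<in>SS k. poly [:-g l, 1:] (g i)) = 0"
    by (rule prod_zero) (use that False in auto)
  then show ?thesis using False by (simp add: poly_prod)
qed

lemma ee_remove: "ee k = (g k - g a) * (\<Prod>l\<in>SS k - {a}. g k - g l)" if "a \<in> SS k"
  using that by (subst prod.remove[of _ a]) auto

lemma poly_dLL: "dv (LL k) (g i) =
   (if i = k then (\<Sum>a\<in>SS k. uu k a) else uu i k * ee i * ww k)" if "i < n" "k < n"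
proof -
  have e: "dv (LL k) (g i) = ww k * (\<Sum>a\<in>SS k. \<Prod>l\<in>SS k - {a}. g i - g l)"
    by (simp add: dv_smult dv_prod dv_lin)
  show ?thesis
  proof (cases "i = k")
    case True
    have "(\<Prod>l\<in>SS k - {a}. g k - g l) = uu k a * ee k" if "a \<in> SS k" for a
    proof -
      have "uu k a * ee k = (uu k a * (g k - g a)) * (\<Prod>l\<in>SS k - {a}. g k - g l)"
        using ee_remove[OF that] by (simp add: mult_ac)
      also have "uu k a * (g k - g a) = 1" using uu[of k a] that \<open>k < n\<close> by (simp add: mult.commute)
      finally show ?thesis by simp
    qed
    then have "(\<Sum>a\<in>SS k. \<Prod>l\<in>SS k - {a}. g k - g l) = (\<Sum>a\<in>SS k. uu k a * ee k)"
      by (rule sum.cong[OF refl])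
    then have "dv (LL k) (g i) = (ee k * ww k) * (\<Sum>a\<in>SS k. uu k a)"
      using e True by (simp add: sum_distrib_right[symmetric] mult_ac)
    then show ?thesis using True ee_ww[OF that(2)] by simp
  next
    case False
    have iS: "i \<in> SS k" using False that by auto
    have z: "(\<Prod>l\<in>SS k - {a}. g i - g l) = 0" if "a \<in> SS k - {i}" for a
      by (rule prod_zero) (use that iS in auto)
    have s: "(\<Sum>a\<in>SS k. \<Prod>l\<in>SS k - {a}. g i - g l) = (\<Prod>l\<in>SS k - {i}. g i - g l)"
      using iS z by (subst sum.remove[of _ i]) auto
    have ei: "ee i = (g i - g k) * (\<Prod>l\<in>SS k - {i}. g i - g l)"
    proof -
      have "SS i = insert k (SS k - {i})" using False that by auto
      then show ?thesis by simp
    qed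
    have "uu i k * ee i = (uu i k * (g i - g k)) * (\<Prod>l\<in>SS k - {i}. g i - g l)"
      unfolding ei by (simp only: mult.assoc)
    also have "uu i k * (g i - g k) = 1" using uu[OF that False] by (simp add: mult.commute)
    finally have "uu i k * ee i = (\<Prod>l\<in>SS k - {i}. g i - g l)" by simp
    then show ?thesis using e False s by (simp only: if_False mult.commute)
  qed
qed

end
lemma pair_sum: "(\<Sum>j\<in>A. [:a j, b j:]) = [:sum a A, sum b A:]"
  by (induction A rule: infinite_finite_induct) auto

lemma const_sum: "(\<Sum>j\<in>A. [:a j:]) = [:sum a A:]"
  by (induction A rule: infinite_finite_induct) auto

lemma const_prod: "(\<Prod>j\<in>A. [:a j:]) = [:prod a A:]" for a :: "_ \<Rightarrow> 'a::comm_ring_1"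
  by (induction A rule: infinite_finite_induct) (auto simp: mult_to_poly mult.commute)

lemma lin_const: "[:a, b:] * [:c:] = [:a * c, b * (c::'a::comm_ring_1):]"
  by (simp add: mult.commute)

definition diagm :: "nat \<Rightarrow> (nat \<Rightarrow> 'a::comm_ring_1) \<Rightarrow> 'a mat" where
  "diagm n d = mat n n (\<lambda>(i,j). if i = j then d i else 0)"

lemma diagm_carrier[simp]: "diagm n d \<in> carrier_mat n n"
  by (simp add: diagm_def)

lemma diagm_mult: "A \<in> carrier_mat n m \<Longrightarrow> diagm n d * A = mat n m (\<lambda>(i,j). d i * A $$ (i,j))"
  by (rule eq_matI) (auto simp: diagm_def scalar_prod_def if_distrib[of "\<lambda>x. x * _"] sum.delta cong: if_cong)

lemma mult_diagm: "A \<in> carrier_mat m n \<Longrightarrow> A * diagm n d = mat m n (\<lambda>(i,j). A $$ (i,j) * d j)"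
  by (rule eq_matI) (auto simp: diagm_def scalar_prod_def if_distrib[of "\<lambda>x. _ * x"] sum.delta' cong: if_cong)

lemma det_diagm: "det (diagm n d) = (\<Prod>i<n. d i)"
proof -
  have "det (diagm n d) = prod_list (diag_mat (diagm n d))"
    by (rule det_upper_triangular[of _ n]) (auto simp: upper_triangular_def diagm_def)
  also have "\<dots> = (\<Prod>i<n. d i)" unfolding diag_mat_def
    by (simp add: diagm_def prod.distinct_set_conv_list[symmetric] lessThan_atLeast0 atLeast_upt)
  finally show ?thesis .
qed

context
  fixes n :: nat and g p :: "nat \<Rightarrow> 'a::comm_ring_1"
  assumes units: "\<And>i j. i < n \<Longrightarrow> j < n \<Longrightarrow> i \<noteq> j \<Longrightarrow> (g i - g j) dvd 1"
begin

abbreviation "SX k \<equiv> {l. l < n \<and> l \<noteq> k}"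
abbreviation "ex k \<equiv> (\<Prod>l\<in>SX k. g k - g l)"
abbreviation "wx k \<equiv> uinv (ex k)"
abbreviation "ux i k \<equiv> uinv (g i - g k)"
abbreviation "LX k \<equiv> Polynomial.smult (wx k) (\<Prod>l\<in>SX k. [:-g l, 1:])"

lemma key: "det (wr_matrix n g p) = Polynomial.smult (vandermonde_const n g) (char_poly (rCM_lax n g p))"
proof -
  define d where "d i k = (if i = k then 1 else (0::'a))" for i k :: nat
  define Lt where "Lt = mat n n (\<lambda>(j,k). [:coeff (LX k) j:])"
  define B where "B = mat n n (\<lambda>(i,k). [: - p i * d i k + dv (LX k) (g i), d i k :])"
  define Vp where "Vp = mat n n (\<lambda>(i,j). [:g i:] ^ j)"
  define W where "W = wr_matrix n g p"
  define T where "T = rCM_lax n g p"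
  have W: "W \<in> carrier_mat n n" by (simp add: W_def wr_matrix_def)
  have Lt: "Lt \<in> carrier_mat n n" by (simp add: Lt_def)
  have Vp: "Vp \<in> carrier_mat n n" by (simp add: Vp_def)
  have B: "B \<in> carrier_mat n n" by (simp add: B_def)
  have T: "T \<in> carrier_mat n n" by (simp add: T_def rCM_lax_def)
  have CT: "char_poly_matrix T \<in> carrier_mat n n" using T by simp
  have S1: "(\<Sum>j<n. g i ^ j * coeff (LX k) j) = d i k" if "i < n" "k < n" for i k
    using poly_sum_lt[OF degree_LL[where n=n and g=g, OF units that(2)], where x="g i"] poly_LL[where n=n and g=g, OF units that]
    by (simp add: d_def mult.commute)
  have S2: "(\<Sum>j<n. of_nat j * g i ^ (j - 1) * coeff (LX k) j) = dv (LX k) (g i)" if "k < n" for i k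
    using dv_sum_lt[OF degree_LL[where n=n and g=g, OF units that], where x="g i"] by simp
  have WL: "W * Lt = B"
  proof (rule eq_matI)
    fix i k assume ik: "i < dim_row B" "k < dim_col B"
    then have ik': "i < n" "k < n" by (auto simp: B_def)
    have "(W * Lt) $$ (i,k) = (\<Sum>j<n. [: - p i * g i ^ j + of_nat j * g i ^ (j - 1), g i ^ j :] * [:coeff (LX k) j:])"
      using ik' by (simp add: W_def wr_matrix_def Lt_def scalar_prod_def lessThan_atLeast0)
    also have "\<dots> = [: (\<Sum>j<n. (- p i * g i ^ j + of_nat j * g i ^ (j - 1)) * coeff (LX k) j),
                        (\<Sum>j<n. g i ^ j * coeff (LX k) j) :]"
      by (simp only: lin_const pair_sum)
    also have "(\<Sum>j<n. (- p i * g i ^ j + of_nat j * g i ^ (j - 1)) * coeff (LX k) j)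
       = - p i * (\<Sum>j<n. g i ^ j * coeff (LX k) j) + (\<Sum>j<n. of_nat j * g i ^ (j - 1) * coeff (LX k) j)"
    proof -
      have "(\<Sum>j<n. (- p i * g i ^ j + of_nat j * g i ^ (j - 1)) * coeff (LX k) j)
          = (\<Sum>j<n. - p i * (g i ^ j * coeff (LX k) j) + of_nat j * g i ^ (j - 1) * coeff (LX k) j)"
        by (rule sum.cong[OF refl]) (simp only: distrib_right mult.assoc)
      also have "\<dots> = - p i * (\<Sum>j<n. g i ^ j * coeff (LX k) j) + (\<Sum>j<n. of_nat j * g i ^ (j - 1) * coeff (LX k) j)"
        by (simp only: sum.distrib sum_distrib_left)
      finally show ?thesis .
    qed
    finally show "(W * Lt) $$ (i,k) = B $$ (i,k)"
      using ik' S1[OF ik'] S2[OF ik'(2)] by (simp add: B_def)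
  qed (auto simp: B_def W_def wr_matrix_def Lt_def)
  have VL: "Vp * Lt = 1\<^sub>m n"
  proof (rule eq_matI)
    fix i k assume ik: "i < dim_row (1\<^sub>m n :: 'a poly mat)" "k < dim_col (1\<^sub>m n :: 'a poly mat)"
    then have ik': "i < n" "k < n" by auto
    have "(Vp * Lt) $$ (i,k) = (\<Sum>j<n. [:g i ^ j * coeff (LX k) j:])"
      using ik' by (simp add: Vp_def Lt_def scalar_prod_def lessThan_atLeast0 poly_const_pow mult_to_poly mult_ac)
    also have "\<dots> = [:d i k:]" by (simp only: const_sum S1[OF ik'])
    finally show "(Vp * Lt) $$ (i,k) = 1\<^sub>m n $$ (i,k)" using ik' by (simp add: d_def)
  qed (auto simp: Vp_def Lt_def)
  have dWL: "det W * det Lt = det B" using det_mult[OF W Lt] WL by simp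
  have dVL: "det Vp * det Lt = 1" using det_mult[OF Vp Lt] VL by simp
  have dVp: "det Vp = [:vandermonde_const n g:]"
  proof -
    have "det Vp = vandermonde_const n (\<lambda>i. [:g i:])" unfolding Vp_def by (rule vandermonde_det)
    also have "\<dots> = [:vandermonde_const n g:]"
      unfolding vandermonde_const_def by (simp add: case_prod_beta const_prod[symmetric])
    finally show ?thesis .
  qed
  have dW: "det W = det B * det Vp"
  proof -
    have "det W = det W * (det Vp * det Lt)" using dVL by simp
    also have "\<dots> = (det W * det Lt) * det Vp" by (simp only: mult_ac)
    also have "\<dots> = det B * det Vp" using dWL by simp
    finally show ?thesis .
  qed
  have dB: "char_poly T = det B"
  proof -
    define Dl where "Dl = diagm n (\<lambda>i. [:wx i ^ 2:])"
    define Dr where "Dr = diagm n (\<lambda>i. [:ex i ^ 2:])"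
    have tr: "transpose_mat (char_poly_matrix T) = Dl * B * Dr"
    proof -
      have "Dl * B * Dr = mat n n (\<lambda>(i,j). [:wx i ^ 2:] * B $$ (i,j) * [:ex j ^ 2:])"
        unfolding Dl_def Dr_def using B
        by (subst mult_diagm) (auto simp: diagm_mult intro!: eq_matI)
      also have "\<dots> = transpose_mat (char_poly_matrix T)"
      proof (rule eq_matI)
        fix i j assume ij: "i < dim_row (transpose_mat (char_poly_matrix T))" "j < dim_col (transpose_mat (char_poly_matrix T))"
        then have ij': "i < n" "j < n" using CT by auto
        show "mat n n (\<lambda>(i,j). [:wx i ^ 2:] * B $$ (i,j) * [:ex j ^ 2:]) $$ (i,j) = transpose_mat (char_poly_matrix T) $$ (i,j)"
        proof (cases "i = j")
          case True
          have ew: "ex i * wx i = 1" using ee_ww[where n=n and g=g, OF units ij'(1)] .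
          have we: "wx i ^ 2 * ex i ^ 2 = 1"
          proof -
            have "wx i ^ 2 * ex i ^ 2 = (ex i * wx i) ^ 2" by (simp only: power_mult_distrib mult.commute)
            then show ?thesis using ew by simp
          qed
          have "[:wx i ^ 2:] * B $$ (i,j) * [:ex j ^ 2:] = [:wx i ^ 2 * ex i ^ 2:] * B $$ (i,j)"
            unfolding True mult_to_poly[symmetric] by (simp only: mult_ac)
          also have "\<dots> = B $$ (i, j)" unfolding we by simp
          finally show ?thesis using True ij' T poly_dLL[where n=n and g=g, OF units ij'(1) ij'(1)]
            by (simp add: B_def d_def T_def rCM_lax_def char_poly_matrix_def)
        next
          case False
          have a: "ux j i = - ux i j" using uu_swap[where n=n and g=g, OF units ij' False] .
          have b: "wx i * ex i = 1" "wx j * ex j = 1" using ee_ww[where n=n and g=g, OF units ij'(1)] ee_ww[where n=n and g=g, OF units ij'(2)]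
            by (simp_all add: mult.commute)
          have "wx i ^ 2 * (ux i j * ex i * wx j) * ex j ^ 2 = ux i j * wx i * ex j * (wx i * ex i) * (wx j * ex j)"
            by (simp add: power2_eq_square mult_ac)
          also have "\<dots> = ux i j * wx i * ex j" unfolding b by simp
          also have "\<dots> = - (ux j i * ex j * wx i)" unfolding a by (simp only: mult_ac minus_mult_left minus_minus)
          finally have c: "wx i ^ 2 * (ux i j * ex i * wx j) * ex j ^ 2 = - (ux j i * ex j * wx i)" .
          have Bij: "B $$ (i,j) = [: ux i j * ex i * wx j :]"
            using ij' False poly_dLL[where n=n and g=g, OF units ij'] by (simp add: B_def d_def)
          have Tji: "T $$ (j,i) = ux j i * ex j * wx i"
            using ij' False by (simp add: T_def rCM_lax_def)
          have Cji: "transpose_mat (char_poly_matrix T) $$ (i,j) = [: - T $$ (j,i) :]"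
            using ij' T CT False by (simp add: char_poly_matrix_def)
          have "mat n n (\<lambda>(i,j). [:wx i ^ 2:] * B $$ (i,j) * [:ex j ^ 2:]) $$ (i,j)
              = [:wx i ^ 2:] * [: ux i j * ex i * wx j :] * [:ex j ^ 2:]"
            using ij' Bij by simp
          also have "\<dots> = [: wx i ^ 2 * (ux i j * ex i * wx j) * ex j ^ 2 :]"
            by (simp only: mult_to_poly)
          also have "\<dots> = transpose_mat (char_poly_matrix T) $$ (i,j)"
            unfolding Cji Tji c ..
          finally show ?thesis .
        qed
      qed (use CT in auto)
      finally show ?thesis by simp
    qed
    have dd: "det Dl * det Dr = 1"
    proof -
      have "det Dl * det Dr = [:\<Prod>i<n. (wx i * ex i) ^ 2:]"
        unfolding Dl_def Dr_def det_diagm const_prod mult_to_poly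
        by (simp add: prod.distrib[symmetric] power_mult_distrib)
      also have "\<dots> = 1" using ee_ww[where n=n and g=g, OF units] by (simp add: mult.commute)
      finally show ?thesis .
    qed
    have "char_poly T = det (transpose_mat (char_poly_matrix T))"
      unfolding char_poly_def by (rule det_transpose[OF CT, symmetric])
    also have "\<dots> = det Dl * det B * det Dr"
    proof -
      have Dlc: "Dl \<in> carrier_mat n n" and Drc: "Dr \<in> carrier_mat n n" by (simp_all add: Dl_def Dr_def)
      have DB: "Dl * B \<in> carrier_mat n n" using Dlc B by simp
      show ?thesis unfolding tr det_mult[OF DB Drc] det_mult[OF Dlc B] ..
    qed
    also have "\<dots> = (det Dl * det Dr) * det B" by (simp only: mult_ac)
    also have "\<dots> = det B" using dd by simp
    finally show ?thesis .
  qed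
  show ?thesis
    unfolding W_def[symmetric] T_def[symmetric] dW dB[symmetric] dVp
    by (simp add: mult.commute)
qed

end

lemma smult_cancel_unit: "(c::'a::comm_ring_1) dvd 1 \<Longrightarrow> Polynomial.smult c x = Polynomial.smult c y \<longleftrightarrow> x = y"
proof
  assume c: "c dvd 1" and e: "Polynomial.smult c x = Polynomial.smult c y"
  have "Polynomial.smult (uinv c) (Polynomial.smult c x) = Polynomial.smult (uinv c) (Polynomial.smult c y)"
    using e by simp
  then show "x = y" using uinv_unit[OF c] by (simp add: mult.commute)
qed simp

theorem mainTheorem5:
  fixes \<phi> :: "complex \<Rightarrow> 'a::comm_ring_1"
    and r :: nat and \<gamma> p a :: "nat \<Rightarrow> 'a"
  assumes "r \<ge> 1"
    and "complex_alg_hom \<phi>"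
    and "\<And>i j. i < r + 1 \<Longrightarrow> j < r + 1 \<Longrightarrow> i \<noteq> j \<Longrightarrow> (\<gamma> i - \<gamma> j) dvd 1"
  shows "Wr_rel (r + 1) \<gamma> p a \<longleftrightarrow> rCM_rel (r + 1) \<gamma> p a"
proof -
  have c: "vandermonde_const (r + 1) \<gamma> dvd 1"
    unfolding vandermonde_const_def by (rule prod_unit) (auto intro: assms(3))
  have k: "det (wr_matrix (r + 1) \<gamma> p) = Polynomial.smult (vandermonde_const (r + 1) \<gamma>) (char_poly (rCM_lax (r + 1) \<gamma> p))"
    by (rule key) (rule assms(3))
  show ?thesis
    unfolding Wr_rel_def rCM_rel_def k
    by (rule smult_cancel_unit[OF c])
qed

end
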